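(* In the setting described in the context, as $n\to\infty$, \[ \frac{1}{(2\pi i)^d}\int_{\mathcal N_{\mathbf 1}}\frac{(1+z_1)\cdots(1+z_{d-1})}{B(\hat{\mathbf z})\,z_1\cdots z_d}\cdot\frac{B(\hat{\mathbf z})-z_d^2A(\hat{\mathbf z})}{1-z_d}\cdot\bar S(\mathbf z)^n\,d\mathbf z\ \sim\ \frac{1}{\pi^d}\int_{\mathcal M}e^{n\log\bar S(e^{i\boldsymbol\theta})}\,d\boldsymbol\theta, \] where $\mathcal M=(-\delta,\delta)^d$ and $e^{i\boldsymbol\theta}=(e^{i\theta_1},\dots,e^{i\theta_d})$ (the logarithm is the principal branch, well-defined since $\bar S(e^{i\boldsymbol\theta})$ is close to the positive real number $S(\mathbf 1)$ on $\mathcal M$ for large $n$).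
   Context: Setting: $d\ge1$; $\mathcal{S}\subset\{-1,0,1\}^d\setminus\{\mathbf 0\}$ with positive weights $w_{\mathbf{i}}$, characteristic polynomial $S(\mathbf{z})=\sum_{\mathbf{i}\in\mathcal{S}}w_{\mathbf{i}}\mathbf{z}^{\mathbf{i}}=z_d^{-1}A(\hat{\mathbf{z}})+Q(\hat{\mathbf{z}})+z_dB(\hat{\mathbf{z}})$ with $\hat{\mathbf z}=(z_1,\dots,z_{d-1})$, where $\mathcal{S}$ is symmetric (including weights) over each of the first $d-1$ axes (so $A,Q,B$ are invariant under $z_j\mapsto1/z_j$, $j\le d-1$), $\mathcal{S}$ has a step with $j$th coordinate $+1$ and one with $-1$ for every $j$, and $A(\mathbf 1)=B(\mathbf 1)$ (zero drift). Let $\bar S(\mathbf z)=S(z_1,\dots,z_{d-1},1/z_d)=z_dA(\hat{\mathbf z})+Q(\hat{\mathbf z})+z_d^{-1}B(\hat{\mathbf z})$. Set $\epsilon=n^{-\alpha}$, $\delta=n^{-\beta}$ with constants satisfying $1/2<\alpha<2\beta$, $\alpha+\beta>1$, $1/3<\beta<1/2$. $\mathcal N_{\mathbf 1}=\{\mathbf z\in\mathbb C^d: |z_j|=1\ (1\le j\le d-1),\ |z_d|=1-\epsilon,\ |\arg z_j|<\delta\ \text{for all } j\}$, with counterclockwise orientation of each arc. *)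

theory Defs
  imports "HOL-Analysis.Analysis" "HOL-Library.Landau_Symbols"
begin

text \<open>Steps are functions nat => int; coordinates 0..d-1 (coordinate d-1 is the
 paper's z_d). Points of C^d are functions nat => complex (only indices < d matter).\<close>

definition char_poly :: "nat \<Rightarrow> (nat \<Rightarrow> int) set \<Rightarrow> ((nat \<Rightarrow> int) \<Rightarrow> real) \<Rightarrow> (nat \<Rightarrow> complex) \<Rightarrow> complex" where
  "char_poly d S w z = (\<Sum>s\<in>S. complex_of_real (w s) * (\<Prod>j<d. z j powi s j))"

definition char_A :: "nat \<Rightarrow> (nat \<Rightarrow> int) set \<Rightarrow> ((nat \<Rightarrow> int) \<Rightarrow> real) \<Rightarrow> (nat \<Rightarrow> complex) \<Rightarrow> complex" where
  "char_A d S w z = (\<Sum>s\<in>{s\<in>S. s (d-1) = -1}. complex_of_real (w s) * (\<Prod>j<d-1. z j powi s j))"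

definition char_B :: "nat \<Rightarrow> (nat \<Rightarrow> int) set \<Rightarrow> ((nat \<Rightarrow> int) \<Rightarrow> real) \<Rightarrow> (nat \<Rightarrow> complex) \<Rightarrow> complex" where
  "char_B d S w z = (\<Sum>s\<in>{s\<in>S. s (d-1) = 1}. complex_of_real (w s) * (\<Prod>j<d-1. z j powi s j))"

definition char_Sbar :: "nat \<Rightarrow> (nat \<Rightarrow> int) set \<Rightarrow> ((nat \<Rightarrow> int) \<Rightarrow> real) \<Rightarrow> (nat \<Rightarrow> complex) \<Rightarrow> complex" where
  "char_Sbar d S w z = char_poly d S w (z(d-1 := inverse (z (d-1))))"

definition angle_box :: "nat \<Rightarrow> real \<Rightarrow> (nat \<Rightarrow> real) set" where
  "angle_box d \<delta> = PiE {..<d} (\<lambda>_. {-\<delta><..<\<delta>})"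

definition arc_point :: "(nat \<Rightarrow> real) \<Rightarrow> (nat \<Rightarrow> real) \<Rightarrow> nat \<Rightarrow> complex" where
  "arc_point r \<theta> = (\<lambda>j. complex_of_real (r j) * cis (\<theta> j))"

text \<open>Integral of F dz_1...dz_d over the product of counterclockwise arcs
 {|z_j| = r_j, |arg z_j| < delta}, parametrised by z_j = r_j e^{i theta_j},
 dz_j = i z_j d theta_j.\<close>
definition torus_arc_integral :: "nat \<Rightarrow> (nat \<Rightarrow> real) \<Rightarrow> real \<Rightarrow> ((nat \<Rightarrow> complex) \<Rightarrow> complex) \<Rightarrow> complex" where
  "torus_arc_integral d r \<delta> F =
     (LINT \<theta>:angle_box d \<delta>|PiM {..<d} (\<lambda>_. lborel).
        F (arc_point r \<theta>) * (\<Prod>j<d. \<i> * arc_point r \<theta> j))"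

end

theory Submission
  imports Defs "HOL-Probability.Characteristic_Functions"
begin

lemma cis_m1: "cmod (cis x - 1) \<le> \<bar>x\<bar>"
  using iexp_approx1[of x 0] by (simp add: cis_conv_exp)

lemma cis_m2: "cmod (cis x - 1 - \<i> * x) \<le> x^2 / 2"
  using iexp_approx1[of x 1] by (simp add: cis_conv_exp power2_eq_square diff_diff_add)

lemma cis_m3: "cmod (cis x - (1 + \<i> * x - x^2/2)) \<le> \<bar>x\<bar>^3 / 6"
  using iexp_approx1[of x 2] by (simp add: cis_conv_exp power2_eq_square eval_nat_numeral fact_numeral algebra_simps)

lemma cos_lb: "cos (x::real) \<ge> 1 - x^2/2"
proof -
  have "\<bar>Re (cis x - 1 - \<i> * x)\<bar> \<le> x^2/2" using cis_m2[of x] abs_Re_le_cmod order_trans by blast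
  thus ?thesis by simp
qed

lemma sin_approx: "\<bar>sin (x::real) - x\<bar> \<le> \<bar>x\<bar>^3 / 6"
proof -
  have "\<bar>Im (cis x - (1 + \<i> * x - x^2/2))\<bar> \<le> \<bar>x\<bar>^3/6" using cis_m3[of x] abs_Im_le_cmod order_trans by blast
  thus ?thesis by (simp add: power2_eq_square)
qed

lemma meas_cis[measurable]: "cis \<in> borel_measurable borel"
  by (intro borel_measurable_continuous_onI continuous_intros)

lemma prod_cis_powi:
  "finite I \<Longrightarrow> (\<Prod>j\<in>I. (complex_of_real (a j) * cis (t j)) powi k j) =
     complex_of_real (\<Prod>j\<in>I. a j powi k j) * cis (\<Sum>j\<in>I. of_int (k j) * t j)"
proof (induction I rule: finite_induct)
  case (insert x F)
  thus ?case by (simp add: power_int_mult_distrib cis_power_int cis_mult[symmetric] algebra_simps)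
qed simp

lemma pow_near1: "cmod ((1 + t) ^ n - 1) \<le> exp (n * cmod t) - 1"
proof -
  have "cmod ((\<Prod>i<n. 1 + t) - 1) \<le> (\<Prod>i<n. 1 + cmod t) - 1"
    by (rule norm_prod_minus1_le_prod_minus1)
  also have "(\<Prod>i<n. 1 + cmod t) = (1 + cmod t) ^ n" by simp
  also have "\<dots> \<le> exp (cmod t) ^ n" by (intro power_mono) auto
  also have "\<dots> = exp (n * cmod t)" by (simp add: exp_of_nat_mult)
  finally show ?thesis by simp
qed

lemma pow_re: assumes "a > 0"
  shows "cmod ((complex_of_real a + \<i> * complex_of_real b) ^ n - complex_of_real (a ^ n)) \<le> a ^ n * (exp (n * \<bar>b\<bar> / a) - 1)"
proof -
  have eq: "complex_of_real a + \<i> * complex_of_real b = complex_of_real a * (1 + \<i> * complex_of_real (b / a))"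
    using assms by (simp add: field_simps)
  have eq2: "(complex_of_real a + \<i> * complex_of_real b) ^ n - complex_of_real (a ^ n)
     = complex_of_real (a ^ n) * ((1 + \<i> * complex_of_real (b / a)) ^ n - 1)"
    by (subst eq, subst power_mult_distrib) (simp add: algebra_simps)
  have "cmod ((complex_of_real a + \<i> * complex_of_real b) ^ n - complex_of_real (a ^ n)) = a ^ n * cmod ((1 + \<i> * complex_of_real (b / a)) ^ n - 1)"
    unfolding eq2 using assms by (simp only: norm_mult norm_of_real) simp
  also have "\<dots> \<le> a ^ n * (exp (n * cmod (\<i> * complex_of_real (b / a))) - 1)"
    using assms by (intro mult_left_mono pow_near1) auto
  also have "cmod (\<i> * complex_of_real (b / a)) = \<bar>b\<bar> / a" using assms by (simp only: norm_mult norm_of_real) simp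
  finally show ?thesis by simp
qed

lemma ratio_bound:
  fixes F G :: "'a \<Rightarrow> complex" and h :: "'a \<Rightarrow> real"
  assumes "set_integrable M A F" "set_integrable M A G" "set_integrable M A h"
    and hpos: "(LINT x:A|M. h x) > 0"
    and b1: "\<And>x. x \<in> A \<Longrightarrow> cmod (G x - complex_of_real (h x)) \<le> e1 * h x"
    and b2: "\<And>x. x \<in> A \<Longrightarrow> cmod (F x - G x) \<le> e2 * h x"
    and e1: "e1 < 1" and e2: "e2 \<ge> 0"
  shows "cmod ((LINT x:A|M. F x) / (LINT x:A|M. G x) - 1) \<le> e2 / (1 - e1)"
proof -
  define H where "H = (LINT x:A|M. h x)"
  have ih: "set_integrable M A (\<lambda>x. complex_of_real (h x))"
    using assms(3) complex_of_real_integrable_eq[of M "\<lambda>x. indicator A x *\<^sub>R h x"]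
    by (simp add: set_integrable_def scaleR_conv_of_real)
  have "cmod ((LINT x:A|M. F x) - (LINT x:A|M. G x)) = cmod (LINT x:A|M. F x - G x)"
    using assms by simp
  also have "\<dots> \<le> (LINT x:A|M. cmod (F x - G x))"
    using assms(1,2) unfolding set_integrable_def set_lebesgue_integral_def
    by (intro order_trans[OF integral_norm_bound]) (simp add: norm_scaleR)
  also have "\<dots> \<le> (LINT x:A|M. e2 * h x)"
    using assms b2 by (intro set_integral_mono) (auto intro!: set_integrable_norm)
  also have "\<dots> = e2 * H" unfolding H_def by simp
  finally have n1: "cmod ((LINT x:A|M. F x) - (LINT x:A|M. G x)) \<le> e2 * H" .
  have "cmod ((LINT x:A|M. G x) - complex_of_real H) = cmod (LINT x:A|M. G x - complex_of_real (h x))"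
    using assms ih by (simp add: H_def set_integral_complex_of_real)
  also have "\<dots> \<le> (LINT x:A|M. cmod (G x - complex_of_real (h x)))"
    using assms(2) ih unfolding set_integrable_def set_lebesgue_integral_def
    by (intro order_trans[OF integral_norm_bound]) (simp add: norm_scaleR)
  also have "\<dots> \<le> (LINT x:A|M. e1 * h x)"
    using assms b1 ih by (intro set_integral_mono) (auto intro!: set_integrable_norm)
  also have "\<dots> = e1 * H" unfolding H_def by simp
  finally have n2: "cmod ((LINT x:A|M. G x) - complex_of_real H) \<le> e1 * H" .
  have H: "H > 0" using hpos H_def by simp
  have "cmod (LINT x:A|M. G x) \<ge> H - e1 * H"
    using n2 norm_triangle_ineq2[of "complex_of_real H" "(LINT x:A|M. G x)"] H
    by (simp add: norm_minus_commute)
  hence g: "cmod (LINT x:A|M. G x) \<ge> (1 - e1) * H" by (simp add: algebra_simps)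
  have gp: "(1 - e1) * H > 0" using e1 H by simp
  hence gnz: "(LINT x:A|M. G x) \<noteq> 0" using g by auto
  have "cmod ((LINT x:A|M. F x) / (LINT x:A|M. G x) - 1)
      = cmod ((LINT x:A|M. F x) - (LINT x:A|M. G x)) / cmod (LINT x:A|M. G x)"
    using gnz by (simp add: field_simps norm_divide[symmetric])
  also have "\<dots> \<le> (e2 * H) / ((1 - e1) * H)"
    using n1 g gp e2 H by (intro frac_le) auto
  also have "\<dots> = e2 / (1 - e1)" using H by simp
  finally show ?thesis .
qed



locale setting =
  fixes d :: nat and S :: "(nat \<Rightarrow> int) set" and w :: "(nat \<Rightarrow> int) \<Rightarrow> real"
  assumes d: "d \<ge> 1"
    and steps: "\<forall>s\<in>S. (\<forall>j<d. s j \<in> {-1, 0, 1}) \<and> (\<forall>j\<ge>d. s j = 0) \<and> s \<noteq> (\<lambda>_. 0)"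
    and wpos: "\<forall>s\<in>S. w s > 0"
    and symS: "\<forall>j<d-1. \<forall>s. s \<in> S \<longleftrightarrow> s(j := - s j) \<in> S"
    and symw: "\<forall>j<d-1. \<forall>s\<in>S. w (s(j := - s j)) = w s"
    and both: "\<forall>j<d. (\<exists>s\<in>S. s j = 1) \<and> (\<exists>s\<in>S. s j = -1)"
    and drift: "char_A d S w (\<lambda>_. 1) = char_B d S w (\<lambda>_. 1)"
begin

abbreviation "m \<equiv> d - 1"

lemma m_lt: "m < d" using d by simp

lemma finS: "finite S"
proof -
  let ?g = "\<lambda>(f::nat\<Rightarrow>int) j. if j < d then f j else 0"
  have "S \<subseteq> ?g ` (PiE {..<d} (\<lambda>_. {-1,0,1::int}))"
  proof
    fix s assume s: "s \<in> S"
    have "s = ?g (restrict s {..<d})" using steps s by (auto simp: fun_eq_iff)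
    moreover have "restrict s {..<d} \<in> PiE {..<d} (\<lambda>_. {-1,0,1::int})" using steps s by auto
    ultimately show "s \<in> ?g ` (PiE {..<d} (\<lambda>_. {-1,0,1::int}))" by blast
  qed
  thus ?thesis by (rule finite_subset) (auto intro!: finite_imageI finite_PiE)
qed

lemma sval: "s \<in> S \<Longrightarrow> j < d \<Longrightarrow> s j = -1 \<or> s j = 0 \<or> s j = 1"
  using steps by auto

definition "sig = (\<Sum>s\<in>S. w s)"
definition "A1 = (\<Sum>s\<in>{s\<in>S. s m = -1}. w s)"
definition "B1 = (\<Sum>s\<in>{s\<in>S. s m = 1}. w s)"

lemma wnn: "s \<in> S \<Longrightarrow> w s \<ge> 0" using wpos by force

lemma A1_eq_B1: "A1 = B1"
  using drift by (simp add: char_A_def char_B_def A1_def B1_def flip: of_real_sum)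

lemma B1_pos: "B1 > 0"
proof -
  obtain s where "s \<in> S" "s m = 1" using both m_lt by blast
  hence "{s\<in>S. s m = 1} \<noteq> {}" by blast
  thus ?thesis unfolding B1_def using finS wpos by (intro sum_pos) auto
qed

lemma B1_le: "B1 \<le> sig"
  unfolding B1_def sig_def using finS wnn by (intro sum_mono2) auto

lemma sig_pos: "sig > 0" using B1_pos B1_le by simp

lemma refl_sum:
  assumes j: "j < m" and P: "\<And>s. P (s(j := - s j)) = P s"
  shows "(\<Sum>s\<in>{s\<in>S. P s}. w s * of_int (s j)) = 0"
proof -
  let ?r = "\<lambda>s::nat\<Rightarrow>int. s(j := - s j)"
  let ?T = "{s\<in>S. P s}"
  have sj: "\<And>s. s \<in> S \<Longrightarrow> ?r s \<in> S" using symS[rule_format, OF j] by blast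
  have "(\<Sum>s\<in>?T. w s * of_int (s j)) = (\<Sum>s\<in>?T. w (?r s) * of_int (?r s j))"
    by (rule sum.reindex_bij_witness[of _ ?r ?r]) (auto simp: sj P)
  also have "\<dots> = (\<Sum>s\<in>?T. - (w s * of_int (s j)))"
    using symw[rule_format, OF j] by (intro sum.cong) auto
  also have "\<dots> = - (\<Sum>s\<in>?T. w s * of_int (s j))" by (simp add: sum_negf)
  finally show ?thesis by simp
qed

definition "sp s j = (if j = m then - s j else s j)"

lemma drift_sp: assumes j: "j < d" shows "(\<Sum>s\<in>S. w s * of_int (sp s j)) = 0"
proof (cases "j = m")
  case True
  have "(\<Sum>s\<in>S. w s * of_int (sp s j)) = (\<Sum>s\<in>S. (if s m = -1 then w s else 0) - (if s m = 1 then w s else 0))"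
    using True sval[OF _ m_lt] by (intro sum.cong) (auto simp: sp_def)
  also have "\<dots> = A1 - B1"
    unfolding A1_def B1_def by (simp add: sum_subtractf sum.inter_filter finS)
  finally show ?thesis using A1_eq_B1 by simp
next
  case False
  hence "j < m" using j by simp
  thus ?thesis using refl_sum[of j "\<lambda>_. True"] False by (simp add: sp_def)
qed

lemma drift_hat: assumes j: "j < m" shows "(\<Sum>s\<in>{s\<in>S. s m = c}. w s * of_int (s j)) = 0"
  using refl_sum[of j "\<lambda>s. s m = c"] j by simp

end


context setting begin

definition "phi s \<theta> = (\<Sum>j<d. of_int (sp s j) * \<theta> j)"
definition "psi s \<theta> = (\<Sum>j<m. of_int (s j) * \<theta> j)"
definition "rv \<rho> = (\<lambda>j. if j = m then \<rho> else (1::real))"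
definition "Gs \<rho> \<theta> = (\<Sum>s\<in>S. complex_of_real (w s * \<rho> powi (- s m)) * cis (phi s \<theta>))"
definition "Ac \<theta> = (\<Sum>s\<in>{s\<in>S. s m = -1}. complex_of_real (w s) * cis (psi s \<theta>))"
definition "Bc \<theta> = (\<Sum>s\<in>{s\<in>S. s m = 1}. complex_of_real (w s) * cis (psi s \<theta>))"

lemma Sbar_closed:
  assumes rho: "\<rho> > 0"
  shows "char_Sbar d S w (arc_point (rv \<rho>) \<theta>) = Gs \<rho> \<theta>"
proof -
  let ?z = "arc_point (rv \<rho>) \<theta>"
  let ?z' = "?z(m := inverse (?z m))"
  define r' where "r' j = (if j = m then inverse \<rho> else 1)" for j
  define t' where "t' j = (if j = m then - \<theta> j else \<theta> j)" for j
  have z': "?z' j = complex_of_real (r' j) * cis (t' j)" for j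
    using rho by (auto simp: arc_point_def rv_def r'_def t'_def)
  have tm: "complex_of_real (w s) * (\<Prod>j<d. ?z' j powi s j) =
        complex_of_real (w s * \<rho> powi (- s m)) * cis (phi s \<theta>)" for s
  proof -
    have "(\<Prod>j<d. ?z' j powi s j) = (\<Prod>j<d. (complex_of_real (r' j) * cis (t' j)) powi s j)"
      using z' by presburger
    also have "\<dots> = complex_of_real (\<Prod>j<d. r' j powi s j) * cis (\<Sum>j<d. of_int (s j) * t' j)"
      by (rule prod_cis_powi) simp
    also have "(\<Prod>j<d. r' j powi s j) = (\<Prod>j<d. if j = m then inverse \<rho> powi s m else 1)"
      by (intro prod.cong) (auto simp: r'_def)
    also have "\<dots> = \<rho> powi (- s m)" using m_lt by (simp add: power_int_minus power_int_inverse)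
    also have "(\<Sum>j<d. of_int (s j) * t' j) = phi s \<theta>"
      unfolding phi_def by (intro sum.cong) (auto simp: t'_def sp_def)
    finally show ?thesis by simp
  qed
  show ?thesis unfolding char_Sbar_def char_poly_def Gs_def
    by (intro sum.cong refl tm)
qed

lemma arc1: "arc_point (\<lambda>_. 1) \<theta> = arc_point (rv 1) \<theta>"
  by (simp add: rv_def arc_point_def)

lemma hat_closed:
  assumes "\<forall>j<m. r j = 1"
  shows "(\<Prod>j<m. arc_point r \<theta> j powi s j) = cis (psi s \<theta>)"
proof -
  have "(\<Prod>j<m. arc_point r \<theta> j powi s j) = (\<Prod>j<m. (complex_of_real (r j) * cis (\<theta> j)) powi s j)"
    by (simp add: arc_point_def)
  also have "\<dots> = complex_of_real (\<Prod>j<m. r j powi s j) * cis (\<Sum>j<m. of_int (s j) * \<theta> j)"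
    by (rule prod_cis_powi) simp
  also have "(\<Prod>j<m. r j powi s j) = 1" using assms by simp
  finally show ?thesis by (simp add: psi_def)
qed

lemma A_closed: assumes "\<forall>j<m. r j = 1" shows "char_A d S w (arc_point r \<theta>) = Ac \<theta>"
  unfolding char_A_def Ac_def using hat_closed[OF assms] by simp

lemma B_closed: assumes "\<forall>j<m. r j = 1" shows "char_B d S w (arc_point r \<theta>) = Bc \<theta>"
  unfolding char_B_def Bc_def using hat_closed[OF assms] by simp

end


context setting begin

definition "bnd (\<delta>::real) (\<theta>::nat\<Rightarrow>real) \<longleftrightarrow> (\<forall>j<d. \<bar>\<theta> j\<bar> \<le> \<delta>)"

lemma lin_bnd:
  assumes "bnd \<delta> \<theta>" "\<forall>j\<in>I. \<bar>c j\<bar> \<le> (1::real)" "I \<subseteq> {..<d}"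
  shows "\<bar>\<Sum>j\<in>I. c j * \<theta> j\<bar> \<le> real d * \<delta>"
proof -
  have fI: "finite I" using assms(3) finite_subset by blast
  have "\<bar>\<Sum>j\<in>I. c j * \<theta> j\<bar> \<le> (\<Sum>j\<in>I. \<bar>c j * \<theta> j\<bar>)" by (rule sum_abs)
  also have "\<dots> \<le> (\<Sum>j\<in>I. \<delta>)"
  proof (intro sum_mono)
    fix j assume j: "j \<in> I"
    hence "\<bar>\<theta> j\<bar> \<le> \<delta>" using assms unfolding bnd_def by auto
    thus "\<bar>c j * \<theta> j\<bar> \<le> \<delta>" using assms(2) j
      by (simp add: abs_mult) (metis abs_ge_zero mult_le_one mult.commute mult_mono order_trans mult_1_left)
  qed
  also have "\<dots> = card I * \<delta>" by simp
  also have "\<dots> \<le> real d * \<delta>"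
  proof -
    have "card I \<le> d" using card_mono[OF _ assms(3)] by simp
    moreover have "\<bar>\<theta> 0\<bar> \<le> \<delta>" using assms(1) d unfolding bnd_def by simp
    hence "\<delta> \<ge> 0" by linarith
    ultimately show ?thesis by (intro mult_right_mono) auto
  qed
  finally show ?thesis .
qed

lemma bnd_nonneg: assumes "bnd \<delta> \<theta>" shows "\<delta> \<ge> 0"
proof -
  have "\<bar>\<theta> 0\<bar> \<le> \<delta>" using assms d unfolding bnd_def by simp
  thus ?thesis by linarith
qed

lemma phi_bnd: "s \<in> S \<Longrightarrow> bnd \<delta> \<theta> \<Longrightarrow> \<bar>phi s \<theta>\<bar> \<le> real d * \<delta>"
  unfolding phi_def
  by (rule lin_bnd) (auto simp: sp_def dest: sval[of s] sval[of s m] intro: m_lt)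

lemma psi_bnd: assumes "s \<in> S" "bnd \<delta> \<theta>" shows "\<bar>psi s \<theta>\<bar> \<le> real d * \<delta>"
proof -
  have "\<forall>j\<in>{..<m}. \<bar>real_of_int (s j)\<bar> \<le> 1"
  proof
    fix j assume "j \<in> {..<m}"
    hence "j < d" by auto
    thus "\<bar>real_of_int (s j)\<bar> \<le> 1" using sval[OF assms(1)] by fastforce
  qed
  thus ?thesis unfolding psi_def by (intro lin_bnd[OF assms(2)]) auto
qed

lemma lin_phi: "(\<Sum>s\<in>S. w s * phi s \<theta>) = 0"
proof -
  have "(\<Sum>s\<in>S. w s * phi s \<theta>) = (\<Sum>j<d. \<theta> j * (\<Sum>s\<in>S. w s * of_int (sp s j)))"
    unfolding phi_def by (simp add: sum_distrib_left sum_distrib_right mult_ac sum.swap[of _ S])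
  also have "\<dots> = 0" by (simp add: drift_sp)
  finally show ?thesis .
qed

lemma lin_psi: "(\<Sum>s\<in>{s\<in>S. s m = c}. w s * psi s \<theta>) = 0"
proof -
  let ?T = "{s\<in>S. s m = c}"
  have "(\<Sum>s\<in>?T. w s * psi s \<theta>) = (\<Sum>s\<in>?T. \<Sum>j<m. \<theta> j * (w s * of_int (s j)))"
    by (simp add: psi_def sum_distrib_left mult_ac)
  also have "\<dots> = (\<Sum>j<m. \<Sum>s\<in>?T. \<theta> j * (w s * of_int (s j)))" by (rule sum.swap)
  also have "\<dots> = (\<Sum>j<m. \<theta> j * (\<Sum>s\<in>?T. w s * of_int (s j)))" by (simp add: sum_distrib_left)
  also have "\<dots> = 0"
  proof (intro sum.neutral ballI)
    fix j assume "j \<in> {..<m}"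
    hence "j < m" by simp
    from drift_hat[OF this, of c] show "\<theta> j * (\<Sum>s\<in>?T. w s * of_int (s j)) = 0" by simp
  qed
  finally show ?thesis .
qed

lemma Gs1: "Gs 1 \<theta> = (\<Sum>s\<in>S. complex_of_real (w s) * cis (phi s \<theta>))"
  by (simp add: Gs_def)

lemma Re_Gs1: "Re (Gs 1 \<theta>) = (\<Sum>s\<in>S. w s * cos (phi s \<theta>))"
  by (simp add: Gs1)

lemma Im_Gs1: "Im (Gs 1 \<theta>) = (\<Sum>s\<in>S. w s * sin (phi s \<theta>))"
  by (simp add: Gs1)

lemma Re_Gs1_lb: assumes "bnd \<delta> \<theta>" "real d * \<delta> \<le> 1" shows "Re (Gs 1 \<theta>) \<ge> sig / 2"
proof -
  have "sig / 2 = (\<Sum>s\<in>S. w s * (1/2))" by (simp add: sig_def sum_distrib_right)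
  also have "\<dots> \<le> (\<Sum>s\<in>S. w s * cos (phi s \<theta>))"
  proof (intro sum_mono mult_left_mono)
    fix s assume s: "s \<in> S"
    have "\<bar>phi s \<theta>\<bar> \<le> 1" using phi_bnd[OF s assms(1)] assms(2) by simp
    hence "(phi s \<theta>)^2 \<le> 1" by (simp add: abs_le_square_iff[where y=1, simplified])
    thus "1/2 \<le> cos (phi s \<theta>)" using cos_lb[of "phi s \<theta>"] by simp
    show "0 \<le> w s" using wnn s .
  qed
  finally show ?thesis by (simp add: Re_Gs1)
qed

lemma Im_Gs1_ub: assumes "bnd \<delta> \<theta>" shows "\<bar>Im (Gs 1 \<theta>)\<bar> \<le> sig * (real d * \<delta>)^3 / 6"
proof -
  have "Im (Gs 1 \<theta>) = (\<Sum>s\<in>S. w s * (sin (phi s \<theta>) - phi s \<theta>))"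
    using lin_phi[of \<theta>] by (simp add: Im_Gs1 algebra_simps sum_subtractf)
  also have "\<bar>\<dots>\<bar> \<le> (\<Sum>s\<in>S. \<bar>w s * (sin (phi s \<theta>) - phi s \<theta>)\<bar>)" by (rule sum_abs)
  also have "\<dots> \<le> (\<Sum>s\<in>S. w s * ((real d * \<delta>)^3 / 6))"
  proof (intro sum_mono)
    fix s assume s: "s \<in> S"
    have "\<bar>phi s \<theta>\<bar>^3 \<le> (real d*\<delta>)^3" using phi_bnd[OF s assms] by (intro power_mono) auto
    hence "\<bar>sin (phi s \<theta>) - phi s \<theta>\<bar> \<le> (real d*\<delta>)^3/6" using sin_approx[of "phi s \<theta>"] by simp
    thus "\<bar>w s * (sin (phi s \<theta>) - phi s \<theta>)\<bar> \<le> w s * ((real d * \<delta>)^3 / 6)"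
      unfolding abs_mult abs_of_nonneg[OF wnn[OF s]] using wnn[OF s] by (intro mult_left_mono) auto
  qed
  also have "\<dots> = sig * (real d * \<delta>)^3 / 6" by (simp add: sig_def sum_distrib_right)
  finally show ?thesis .
qed

lemma norm_Gs1: "cmod (Gs 1 \<theta>) \<le> sig"
proof -
  have "cmod (Gs 1 \<theta>) \<le> (\<Sum>s\<in>S. cmod (complex_of_real (w s) * cis (phi s \<theta>)))"
    unfolding Gs1 by (rule norm_sum)
  also have "\<dots> = sig" using wnn by (simp add: sig_def norm_mult)
  finally show ?thesis .
qed

end


context setting begin

lemma D_bnd:
  assumes b: "bnd \<delta> \<theta>" and e: "0 < \<epsilon>" "\<epsilon> \<le> 1/2"
  shows "cmod (Gs (1 - \<epsilon>) \<theta> - Gs 1 \<theta>) \<le> 2 * sig * (\<epsilon> * (real d * \<delta>) + \<epsilon>^2)"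
proof -
  define \<rho> where "\<rho> = 1 - \<epsilon>"
  have \<rho>: "\<rho> > 0" "\<rho> \<ge> 1/2" using e by (auto simp: \<rho>_def)
  define c where "c s = \<rho> powi (- s m) - 1" for s
  have cform: "c s = (if s m = 1 then 1/\<rho> - 1 else 0) + (if s m = -1 then \<rho> - 1 else 0)" if "s \<in> S" for s
    using sval[OF that m_lt] by (auto simp: c_def power_int_minus divide_inverse)
  have cabs: "\<bar>c s\<bar> \<le> 2 * \<epsilon>" if "s \<in> S" for s
  proof -
    have "\<bar>1/\<rho> - 1\<bar> \<le> 2 * \<epsilon>"
    proof -
      have "1/\<rho> - 1 = \<epsilon> / \<rho>" using \<rho> by (simp add: \<rho>_def field_simps)
      also have "\<dots> \<le> 2 * \<epsilon>" using \<rho> e by (simp add: field_simps)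
      finally show ?thesis using \<rho> e by (simp add: \<open>1/\<rho> - 1 = \<epsilon> / \<rho>\<close>)
    qed
    moreover have "\<bar>\<rho> - 1\<bar> \<le> 2 * \<epsilon>" using e by (simp add: \<rho>_def)
    ultimately show ?thesis using cform[OF that] e by auto
  qed
  have csum: "(\<Sum>s\<in>S. w s * c s) = B1 * \<epsilon>^2 / \<rho>"
  proof -
    have "(\<Sum>s\<in>S. w s * c s) = (\<Sum>s\<in>S. (if s m = 1 then w s else 0) * (1/\<rho> - 1) + (if s m = -1 then w s else 0) * (\<rho> - 1))"
      by (intro sum.cong refl) (simp add: cform algebra_simps)
    also have "\<dots> = B1 * (1/\<rho> - 1) + A1 * (\<rho> - 1)"
      unfolding A1_def B1_def by (simp add: sum.distrib sum_distrib_right[symmetric] sum.inter_filter finS)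
    also have "\<dots> = B1 * \<epsilon>^2 / \<rho>" using \<rho> A1_eq_B1 by (simp add: \<rho>_def field_simps power2_eq_square)
    finally show ?thesis .
  qed
  have "Gs \<rho> \<theta> - Gs 1 \<theta> = (\<Sum>s\<in>S. complex_of_real (w s * c s) * cis (phi s \<theta>))"
    by (simp add: Gs_def c_def sum_subtractf[symmetric] algebra_simps)
  also have "\<dots> = (\<Sum>s\<in>S. complex_of_real (w s * c s) * (cis (phi s \<theta>) - 1)) + complex_of_real (\<Sum>s\<in>S. w s * c s)"
    by (simp add: algebra_simps sum_subtractf)
  finally have eq: "Gs \<rho> \<theta> - Gs 1 \<theta> = \<dots>" .
  have "cmod (\<Sum>s\<in>S. complex_of_real (w s * c s) * (cis (phi s \<theta>) - 1)) \<le> (\<Sum>s\<in>S. cmod (complex_of_real (w s * c s) * (cis (phi s \<theta>) - 1)))"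
    by (rule norm_sum)
  also have "\<dots> \<le> (\<Sum>s\<in>S. w s * (2 * \<epsilon> * (real d * \<delta>)))"
  proof (intro sum_mono)
    fix s assume s: "s \<in> S"
    have "cmod (complex_of_real (w s * c s) * (cis (phi s \<theta>) - 1)) = w s * \<bar>c s\<bar> * cmod (cis (phi s \<theta>) - 1)"
      using wnn[OF s] by (simp add: norm_mult abs_mult)
    also have "\<dots> \<le> w s * (2 * \<epsilon>) * (real d * \<delta>)"
      using wnn[OF s] cabs[OF s] order_trans[OF cis_m1 phi_bnd[OF s b]]
      by (intro mult_mono mult_left_mono) auto
    finally show "cmod (complex_of_real (w s * c s) * (cis (phi s \<theta>) - 1)) \<le> w s * (2 * \<epsilon> * (real d * \<delta>))"
      by (simp add: mult_ac)
  qed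
  also have "\<dots> = (\<Sum>s\<in>S. w s) * (2 * \<epsilon> * (real d * \<delta>))" by (rule sum_distrib_right[symmetric])
  also have "\<dots> = 2 * sig * (\<epsilon> * (real d * \<delta>))" by (simp add: sig_def)
  finally have n1: "cmod (\<Sum>s\<in>S. complex_of_real (w s * c s) * (cis (phi s \<theta>) - 1)) \<le> 2 * sig * (\<epsilon> * (real d * \<delta>))" .
  have "cmod (complex_of_real (\<Sum>s\<in>S. w s * c s)) = B1 * \<epsilon>^2 / \<rho>"
    using csum B1_pos \<rho> by (simp only: norm_of_real) simp
  also have "\<dots> \<le> B1 * \<epsilon>^2 * 2" using B1_pos \<rho> mult_left_mono[of 1 "\<rho>*2" "\<epsilon>^2"] by (simp add: field_simps)
  also have "\<dots> \<le> sig * \<epsilon>^2 * 2" using B1_le by (intro mult_right_mono) auto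
  finally have n2: "cmod (complex_of_real (\<Sum>s\<in>S. w s * c s)) \<le> 2 * sig * \<epsilon>^2" by simp
  show ?thesis unfolding \<rho>_def[symmetric] eq
    using norm_triangle_le[OF add_mono[OF n1 n2]] by (simp add: algebra_simps)
qed

lemma decomp:
  "(\<Sum>s\<in>T. complex_of_real (w s) * cis (psi s \<theta>)) =
    (\<Sum>s\<in>T. complex_of_real (w s) * (cis (psi s \<theta>) - 1 - \<i> * psi s \<theta>)) + complex_of_real (\<Sum>s\<in>T. w s)
      + \<i> * complex_of_real (\<Sum>s\<in>T. w s * psi s \<theta>)"
  by (simp add: algebra_simps sum.distrib sum_subtractf sum_distrib_left)

lemma sum_err2:
  assumes b: "bnd \<delta> \<theta>" and T: "T \<subseteq> S"
  shows "cmod (\<Sum>s\<in>T. complex_of_real (w s) * (cis (psi s \<theta>) - 1 - \<i> * psi s \<theta>)) \<le> (\<Sum>s\<in>T. w s) * (real d * \<delta>)^2 / 2"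
proof -
  have "cmod (\<Sum>s\<in>T. complex_of_real (w s) * (cis (psi s \<theta>) - 1 - \<i> * psi s \<theta>)) \<le> (\<Sum>s\<in>T. cmod (complex_of_real (w s) * (cis (psi s \<theta>) - 1 - \<i> * psi s \<theta>)))"
    by (rule norm_sum)
  also have "\<dots> \<le> (\<Sum>s\<in>T. w s * ((real d * \<delta>)^2 / 2))"
  proof (intro sum_mono)
    fix s assume s: "s \<in> T"
    hence sS: "s \<in> S" using T by auto
    have "(psi s \<theta>)^2 \<le> (real d * \<delta>)^2"
      using psi_bnd[OF sS b] by (simp add: abs_le_square_iff[symmetric] power2_eq_square abs_mult)
        (metis abs_ge_zero abs_mult_self_eq mult_mono order_trans)
    hence "cmod (cis (psi s \<theta>) - 1 - \<i> * psi s \<theta>) \<le> (real d * \<delta>)^2 / 2"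
      using cis_m2[of "psi s \<theta>"] by simp
    thus "cmod (complex_of_real (w s) * (cis (psi s \<theta>) - 1 - \<i> * psi s \<theta>)) \<le> w s * ((real d * \<delta>)^2 / 2)"
    proof -
      have "cmod (complex_of_real (w s) * (cis (psi s \<theta>) - 1 - \<i> * psi s \<theta>)) = w s * cmod (cis (psi s \<theta>) - 1 - \<i> * psi s \<theta>)"
        using wnn[OF sS] by (simp add: norm_mult)
      thus ?thesis using wnn[OF sS] \<open>cmod (cis (psi s \<theta>) - 1 - \<i> * psi s \<theta>) \<le> (real d * \<delta>)^2 / 2\<close>
        by (metis mult_left_mono)
    qed
  qed
  also have "\<dots> = (\<Sum>s\<in>T. w s) * (real d * \<delta>)^2 / 2" by (simp add: sum_distrib_right)
  finally show ?thesis .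
qed

lemma BA_bnd: assumes b: "bnd \<delta> \<theta>" shows "cmod (Bc \<theta> - Ac \<theta>) \<le> B1 * (real d * \<delta>)^2"
proof -
  let ?Tp = "{s\<in>S. s m = 1}" and ?Tm = "{s\<in>S. s m = -1}"
  let ?E = "\<lambda>T. (\<Sum>s\<in>T. complex_of_real (w s) * (cis (psi s \<theta>) - 1 - \<i> * psi s \<theta>))"
  have "Bc \<theta> = ?E ?Tp + complex_of_real B1"
    unfolding Bc_def B1_def by (subst decomp, subst lin_psi) simp
  moreover have "Ac \<theta> = ?E ?Tm + complex_of_real B1"
    unfolding Ac_def A1_eq_B1[symmetric] A1_def by (subst decomp, subst lin_psi) simp
  ultimately have "Bc \<theta> - Ac \<theta> = ?E ?Tp - ?E ?Tm" by simp
  hence "cmod (Bc \<theta> - Ac \<theta>) \<le> cmod (?E ?Tp) + cmod (?E ?Tm)" by (simp add: norm_triangle_ineq4)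
  also have "\<dots> \<le> B1 * (real d * \<delta>)^2 / 2 + A1 * (real d * \<delta>)^2 / 2"
    unfolding A1_def B1_def by (intro add_mono sum_err2[OF b]) auto
  also have "\<dots> = B1 * (real d * \<delta>)^2" using A1_eq_B1 by simp
  finally show ?thesis .
qed

lemma Bc_B1: assumes b: "bnd \<delta> \<theta>" shows "cmod (Bc \<theta> - complex_of_real B1) \<le> B1 * (real d * \<delta>)"
proof -
  let ?T = "{s\<in>S. s m = 1}"
  have "Bc \<theta> - complex_of_real B1 = (\<Sum>s\<in>?T. complex_of_real (w s) * (cis (psi s \<theta>) - 1))"
    unfolding Bc_def B1_def by (simp add: algebra_simps sum_subtractf)
  also have "cmod \<dots> \<le> (\<Sum>s\<in>?T. cmod (complex_of_real (w s) * (cis (psi s \<theta>) - 1)))" by (rule norm_sum)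
  also have "\<dots> \<le> (\<Sum>s\<in>?T. w s * (real d * \<delta>))"
  proof (intro sum_mono)
    fix s assume "s \<in> ?T"
    hence s: "s \<in> S" by auto
    show "cmod (complex_of_real (w s) * (cis (psi s \<theta>) - 1)) \<le> w s * (real d * \<delta>)"
      using wnn[OF s] order_trans[OF cis_m1 psi_bnd[OF s b]] by (simp add: norm_mult mult_left_mono)
  qed
  also have "\<dots> = B1 * (real d * \<delta>)" by (simp add: B1_def sum_distrib_right)
  finally show ?thesis .
qed

end


context setting begin

definition "uu \<rho> \<theta> = complex_of_real \<rho> * cis (\<theta> m)"
definition "Pf \<rho> \<theta> = (\<Prod>j<m. 1 + cis (\<theta> j)) / Bc \<theta> * ((Bc \<theta> - (uu \<rho> \<theta>)^2 * Ac \<theta>) / (1 - uu \<rho> \<theta>))"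
definition "etaQ \<epsilon> \<delta> = (real d * \<delta>)^2 / \<epsilon> + 2 * (real d * \<delta>)^2 + \<epsilon> + \<delta>"
definition "etaX \<delta> = exp (real d * \<delta>) - 1"

lemma P_bnd:
  assumes b: "bnd \<delta> \<theta>" and e: "0 < \<epsilon>" "\<epsilon> \<le> 1/2" and dd: "real d * \<delta> \<le> 1/2"
  shows "cmod (Pf (1 - \<epsilon>) \<theta> / 2^d - 1) \<le> etaX \<delta> * (1 + etaQ \<epsilon> \<delta>) + etaQ \<epsilon> \<delta>"
proof -
  define u where "u = uu (1 - \<epsilon>) \<theta>"
  define B where "B = Bc \<theta>"
  define A where "A = Ac \<theta>"
  have \<delta>0: "\<delta> \<ge> 0" using bnd_nonneg[OF b] .
  have thm0: "\<bar>\<theta> m\<bar> \<le> \<delta>" using b m_lt by (auto simp: bnd_def)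
  have hB: "cmod B \<ge> B1 / 2"
  proof -
    have "cmod (B - complex_of_real B1) \<le> B1 * (real d * \<delta>)" using Bc_B1[OF b] by (simp add: B_def)
    also have "\<dots> \<le> B1 * (1/2)" using dd B1_pos by (intro mult_left_mono) auto
    finally have "cmod (B - complex_of_real B1) \<le> B1/2" by simp
    moreover have "cmod (complex_of_real B1) - cmod (B - complex_of_real B1) \<le> cmod B"
      using norm_triangle_ineq2[of "complex_of_real B1" B] by (simp add: norm_minus_commute)
    ultimately show ?thesis using B1_pos by simp
  qed
  have B0: "B \<noteq> 0" using hB B1_pos by auto
  have Bpos: "cmod B > 0" using B0 by simp
  have nu: "cmod u = 1 - \<epsilon>" using e by (simp only: u_def uu_def norm_mult norm_of_real norm_cis) simp
  have h1u: "cmod (1 - u) \<ge> \<epsilon>"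
    using norm_triangle_ineq2[of 1 u] nu by simp
  have u1: "1 - u \<noteq> 0" using h1u e by auto
  have hu1: "cmod (u - 1) \<le> \<epsilon> + \<delta>"
  proof -
    have "u - 1 = - complex_of_real \<epsilon> * cis (\<theta> m) + (cis (\<theta> m) - 1)"
      by (simp add: u_def uu_def algebra_simps)
    hence "cmod (u - 1) \<le> cmod (- complex_of_real \<epsilon> * cis (\<theta> m)) + cmod (cis (\<theta> m) - 1)"
      by (metis norm_triangle_ineq)
    also have "\<dots> \<le> \<epsilon> + \<delta>" using e order_trans[OF cis_m1 thm0] by (simp add: norm_mult)
    finally show ?thesis .
  qed
  have hup: "cmod (1 + u) \<le> 2"
    using norm_triangle_ineq[of 1 u] nu e by simp
  have hBA: "cmod (B - A) \<le> B1 * (real d * \<delta>)^2" using BA_bnd[OF b] by (simp add: A_def B_def)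
  define Q where "Q = (B - u^2 * A) / (1 - u) / B"
  have Qid: "Q - 2 = (B - A) / ((1 - u) * B) + ((A - B) * (1 + u) + B * (u - 1)) / B"
    using B0 u1 unfolding Q_def by (simp add: field_simps) (simp add: algebra_simps power2_eq_square)
  have t1: "cmod ((B - A) / ((1 - u) * B)) \<le> 2 * (real d * \<delta>)^2 / \<epsilon>"
  proof -
    have "cmod ((B - A) / ((1 - u) * B)) = cmod (B - A) / (cmod (1 - u) * cmod B)"
      by (simp add: norm_divide norm_mult)
    also have "\<dots> \<le> (B1 * (real d * \<delta>)^2) / (\<epsilon> * (B1/2))"
      using hBA h1u hB e B1_pos by (intro frac_le mult_mono) auto
    also have "\<dots> = 2 * (real d * \<delta>)^2 / \<epsilon>" using B1_pos by (simp add: field_simps)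
    finally show ?thesis .
  qed
  have t2: "cmod (((A - B) * (1 + u) + B * (u - 1)) / B) \<le> 4 * (real d * \<delta>)^2 + (\<epsilon> + \<delta>)"
  proof -
    have "((A - B) * (1 + u) + B * (u - 1)) / B = (A - B) * (1 + u) / B + (u - 1)"
      using B0 by (simp add: field_simps)
    hence "cmod (((A - B) * (1 + u) + B * (u - 1)) / B) \<le> cmod ((A - B) * (1 + u) / B) + cmod (u - 1)"
      by (metis norm_triangle_ineq)
    also have "cmod ((A - B) * (1 + u) / B) = cmod (B - A) * cmod (1 + u) / cmod B"
      by (simp add: norm_divide norm_mult norm_minus_commute)
    also have "\<dots> \<le> (B1 * (real d * \<delta>)^2 * 2) / (B1 / 2)"
      using hBA hup hB B1_pos by (intro frac_le mult_mono) auto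
    also have "\<dots> = 4 * (real d * \<delta>)^2" using B1_pos by (simp add: field_simps)
    finally show ?thesis using hu1 by simp
  qed
  have hQ: "cmod (Q / 2 - 1) \<le> etaQ \<epsilon> \<delta>"
  proof -
    have "Q / 2 - 1 = (Q - 2) / 2" by simp
    hence "cmod (Q / 2 - 1) = cmod (Q - 2) / 2" by (simp only: norm_divide) simp
    also have "cmod (Q - 2) \<le> 2 * (real d * \<delta>)^2 / \<epsilon> + (4 * (real d * \<delta>)^2 + (\<epsilon> + \<delta>))"
      unfolding Qid using norm_triangle_le[OF add_mono[OF t1 t2]] .
    hence "cmod (Q - 2) \<le> 2 * ((real d * \<delta>)^2 / \<epsilon>) + 4 * (real d * \<delta>)^2 + (\<epsilon> + \<delta>)"
      by simp
    hence "cmod (Q - 2) / 2 \<le> etaQ \<epsilon> \<delta>"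
      using e \<delta>0 unfolding etaQ_def by linarith
    finally show ?thesis by simp
  qed
  define X where "X = (\<Prod>j<m. 1 + (cis (\<theta> j) - 1) / 2)"
  have hX: "cmod (X - 1) \<le> etaX \<delta>"
  proof -
    have "cmod (X - 1) \<le> (\<Prod>j<m. 1 + cmod ((cis (\<theta> j) - 1) / 2)) - 1"
      unfolding X_def by (rule norm_prod_minus1_le_prod_minus1)
    also have "(\<Prod>j<m. 1 + cmod ((cis (\<theta> j) - 1) / 2)) \<le> (\<Prod>j<m. exp \<delta>)"
    proof (intro prod_mono conjI)
      fix j assume "j \<in> {..<m}"
      hence "\<bar>\<theta> j\<bar> \<le> \<delta>" using b by (auto simp: bnd_def)
      hence "cmod ((cis (\<theta> j) - 1) / 2) \<le> \<delta>" using order_trans[OF cis_m1] \<delta>0 by (simp add: norm_divide)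
      thus "1 + cmod ((cis (\<theta> j) - 1) / 2) \<le> exp \<delta>" using exp_ge_add_one_self[of \<delta>] by linarith
    qed auto
    also have "(\<Prod>j<m. exp \<delta>) = exp (real m * \<delta>)" by (simp add: exp_of_nat_mult)
    also have "\<dots> \<le> exp (real d * \<delta>)" using \<delta>0 by (intro exp_mono mult_right_mono) auto
    finally show ?thesis by (simp add: etaX_def)
  qed
  have PX: "Pf (1 - \<epsilon>) \<theta> / 2^d = X * (Q / 2)"
  proof -
    have "X = (\<Prod>j<m. (1 + cis (\<theta> j)) / 2)" unfolding X_def by (intro prod.cong) (auto simp: field_simps)
    also have "\<dots> = (\<Prod>j<m. 1 + cis (\<theta> j)) / (\<Prod>j<m. 2)" by (rule prod_dividef)
    finally have "(\<Prod>j<m. 1 + cis (\<theta> j)) = 2^m * X" by simp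
    moreover have "(2::complex)^d = 2^m * 2" using d by (metis Suc_diff_1 less_le_trans power_Suc2 zero_less_one)
    ultimately show ?thesis using B0 u1
      by (simp add: Pf_def Q_def u_def[symmetric] A_def[symmetric] B_def[symmetric] field_simps)
  qed
  have "X * (Q / 2) - 1 = (X - 1) * (Q / 2) + (Q / 2 - 1)" by (simp add: field_simps)
  hence "cmod (X * (Q / 2) - 1) \<le> cmod (X - 1) * cmod (Q / 2) + cmod (Q / 2 - 1)"
    by (metis norm_mult norm_triangle_ineq)
  also have "cmod (Q / 2) \<le> 1 + etaQ \<epsilon> \<delta>"
    using norm_triangle_ineq[of "Q/2 - 1" 1] hQ by simp
  hence "cmod (X - 1) * cmod (Q / 2) \<le> etaX \<delta> * (1 + etaQ \<epsilon> \<delta>)"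
    using hX order_trans[OF norm_ge_zero hX] by (intro mult_mono) auto
  finally show ?thesis unfolding PX using hQ by simp
qed

end


lemma set_integrable_bdd:
  fixes f :: "'a \<Rightarrow> 'b::{banach, second_countable_topology}"
  assumes A: "A \<in> sets M" "emeasure M A < \<infinity>" and f: "f \<in> borel_measurable M"
    and b: "\<And>x. x \<in> A \<Longrightarrow> norm (f x) \<le> C"
  shows "set_integrable M A f"
proof (rule set_integrable_bound[of M A "\<lambda>_. C"])
  show "set_integrable M A (\<lambda>_. C)" using A unfolding set_integrable_def
    by (intro integrable_scaleR_left integrable_real_indicator)
  show "set_borel_measurable M A f" unfolding set_borel_measurable_def using A f by measurable
  show "AE x in M. x \<in> A \<longrightarrow> norm (f x) \<le> norm C" using b by (intro AE_I2) force
qed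

context setting begin

lemma meas_Gs: "(\<lambda>\<theta>. Gs \<rho> \<theta> ^ n) \<in> borel_measurable (PiM {..<d} (\<lambda>_. lborel))"
  unfolding Gs_def phi_def by measurable

lemma meas_h: "(\<lambda>\<theta>. Re (Gs 1 \<theta>) ^ n) \<in> borel_measurable (PiM {..<d} (\<lambda>_. lborel))"
  unfolding Gs_def phi_def by measurable

lemma meas_Ac[measurable]: "Ac \<in> borel_measurable (PiM {..<d} (\<lambda>_. lborel))"
  unfolding Ac_def psi_def by measurable

lemma meas_Bc[measurable]: "Bc \<in> borel_measurable (PiM {..<d} (\<lambda>_. lborel))"
  unfolding Bc_def psi_def by measurable

lemma meas_Gs'[measurable]: "Gs \<rho> \<in> borel_measurable (PiM {..<d} (\<lambda>_. lborel))"
  unfolding Gs_def phi_def by measurable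

lemma meas_m: "(\<lambda>\<theta>::nat\<Rightarrow>real. \<theta> m) \<in> borel_measurable (PiM {..<d} (\<lambda>_. lborel))"
  using measurable_component_singleton[of m "{..<d}" "\<lambda>_. lborel"] m_lt by simp

lemma meas_F: "(\<lambda>\<theta>. Pf \<rho> \<theta> / 2^d * Gs \<rho> \<theta> ^ n) \<in> borel_measurable (PiM {..<d} (\<lambda>_. lborel))"
proof -
  have [measurable]: "(\<lambda>\<theta>. cis (\<theta> m)) \<in> borel_measurable (PiM {..<d} (\<lambda>_. lborel))"
    using measurable_compose[OF meas_m meas_cis] by (simp add: o_def)
  have [measurable]: "(\<lambda>\<theta>. \<Prod>j<m. 1 + cis (\<theta> j)) \<in> borel_measurable (PiM {..<d} (\<lambda>_. lborel))"
    by measurable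
  show ?thesis unfolding Pf_def uu_def by measurable
qed

lemma box_sets: "angle_box d \<delta> \<in> sets (PiM {..<d} (\<lambda>_. lborel))"
  unfolding angle_box_def by (intro sets_PiM_I_finite) auto

lemma box_emeasure: "\<delta> > 0 \<Longrightarrow> emeasure (PiM {..<d} (\<lambda>_. lborel)) (angle_box d \<delta>) = ennreal ((2 * \<delta>) ^ d)"
proof -
  assume "\<delta> > 0"
  interpret product_sigma_finite "\<lambda>_::nat. lborel :: real measure" by standard
  show ?thesis unfolding angle_box_def using \<open>\<delta> > 0\<close>
    by (subst emeasure_PiM) (auto simp: prod_ennreal ennreal_power)
qed

end


context setting begin

lemma box_bnd: assumes "\<theta> \<in> angle_box d \<delta>" shows "bnd \<delta> \<theta>"
  unfolding bnd_def
proof (intro allI impI)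
  fix j assume "j < d"
  hence "\<theta> j \<in> {-\<delta><..<\<delta>}" using assms unfolding angle_box_def by (auto simp: PiE_iff)
  thus "\<bar>\<theta> j\<bar> \<le> \<delta>" by auto
qed

lemma pt_G:
  assumes b: "bnd \<delta> \<theta>" and dd: "real d * \<delta> \<le> 1/2"
  shows "cmod (Gs 1 \<theta> ^ n - complex_of_real (Re (Gs 1 \<theta>) ^ n)) \<le> (exp (n * (real d * \<delta>)^3 / 3) - 1) * Re (Gs 1 \<theta>) ^ n"
proof -
  define a where "a = Re (Gs 1 \<theta>)"
  define bb where "bb = Im (Gs 1 \<theta>)"
  have a: "a \<ge> sig / 2" using Re_Gs1_lb[OF b] dd unfolding a_def by simp
  have apos: "a > 0" using a sig_pos by simp
  have bb: "\<bar>bb\<bar> \<le> sig * (real d * \<delta>)^3 / 6" using Im_Gs1_ub[OF b] unfolding bb_def .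
  have g: "Gs 1 \<theta> = complex_of_real a + \<i> * complex_of_real bb"
    unfolding a_def bb_def by (simp add: complex_eq_iff)
  have "\<bar>bb\<bar> / a \<le> (sig * (real d * \<delta>)^3 / 6) / (sig / 2)"
    using bb a sig_pos by (intro frac_le) auto
  also have "\<dots> = (real d * \<delta>)^3 / 3" using sig_pos by (simp add: field_simps)
  finally have r: "\<bar>bb\<bar> / a \<le> (real d * \<delta>)^3 / 3" .
  have "cmod (Gs 1 \<theta> ^ n - complex_of_real (a ^ n)) \<le> a ^ n * (exp (n * \<bar>bb\<bar> / a) - 1)"
    unfolding g by (rule pow_re[OF apos])
  also have "\<dots> \<le> a ^ n * (exp (n * (real d * \<delta>)^3 / 3) - 1)"
  proof (intro mult_left_mono diff_right_mono exp_mono)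
    show "real n * \<bar>bb\<bar> / a \<le> real n * (real d * \<delta>)^3 / 3"
      using mult_left_mono[OF r, of "real n"] by simp
  qed (use apos in auto)
  finally show ?thesis by (simp add: a_def mult.commute)
qed

lemma pt_F:
  assumes b: "bnd \<delta> \<theta>" and dd: "real d * \<delta> \<le> 1/2" and e: "0 < \<epsilon>" "\<epsilon> \<le> 1/2"
    and e1: "cmod (Gs 1 \<theta> ^ n - complex_of_real (Re (Gs 1 \<theta>) ^ n)) \<le> E1 * Re (Gs 1 \<theta>) ^ n"
  shows "cmod (Pf (1 - \<epsilon>) \<theta> / 2^d * Gs (1 - \<epsilon>) \<theta> ^ n - Gs 1 \<theta> ^ n)
    \<le> ((etaX \<delta> * (1 + etaQ \<epsilon> \<delta>) + etaQ \<epsilon> \<delta>) + (exp (n * (4 * (\<epsilon> * (real d * \<delta>) + \<epsilon>^2))) - 1)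
        + (etaX \<delta> * (1 + etaQ \<epsilon> \<delta>) + etaQ \<epsilon> \<delta>) * (exp (n * (4 * (\<epsilon> * (real d * \<delta>) + \<epsilon>^2))) - 1))
       * (1 + E1) * Re (Gs 1 \<theta>) ^ n"
proof -
  define g where "g = Gs 1 \<theta>"
  define etP where "etP = etaX \<delta> * (1 + etaQ \<epsilon> \<delta>) + etaQ \<epsilon> \<delta>"
  define etq where "etq = exp (n * (4 * (\<epsilon> * (real d * \<delta>) + \<epsilon>^2))) - 1"
  define h where "h = Re g ^ n"
  have a: "Re g \<ge> sig / 2" using Re_Gs1_lb[OF b] dd unfolding g_def by simp
  have ng: "cmod g \<ge> sig / 2" using a abs_Re_le_cmod[of g] by linarith
  have g0: "g \<noteq> 0" using ng sig_pos by auto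
  define t where "t = (Gs (1 - \<epsilon>) \<theta> - g) / g"
  define p where "p = Pf (1 - \<epsilon>) \<theta> / 2^d - 1"
  define q where "q = (1 + t) ^ n - 1"
  have hp: "cmod p \<le> etP" unfolding p_def etP_def using P_bnd[OF b e dd] .
  have ht: "cmod t \<le> 4 * (\<epsilon> * (real d * \<delta>) + \<epsilon>^2)"
  proof -
    have "cmod t = cmod (Gs (1 - \<epsilon>) \<theta> - g) / cmod g" by (simp add: t_def norm_divide)
    also have "\<dots> \<le> (2 * sig * (\<epsilon> * (real d * \<delta>) + \<epsilon>^2)) / (sig / 2)"
      using D_bnd[OF b e] ng sig_pos bnd_nonneg[OF b] e unfolding g_def by (intro frac_le) auto
    also have "\<dots> = 4 * (\<epsilon> * (real d * \<delta>) + \<epsilon>^2)" using sig_pos by (simp add: field_simps)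
    finally show ?thesis .
  qed
  have hq: "cmod q \<le> etq"
  proof -
    have "cmod q \<le> exp (n * cmod t) - 1" unfolding q_def by (rule pow_near1)
    also have "\<dots> \<le> etq" unfolding etq_def using ht by (intro diff_right_mono exp_mono mult_left_mono) auto
    finally show ?thesis .
  qed
  have hP0: "etP \<ge> 0" using hp norm_ge_zero order_trans by blast
  have hq0: "etq \<ge> 0" using hq norm_ge_zero order_trans by blast
  have gr: "Gs (1 - \<epsilon>) \<theta> = g * (1 + t)" using g0 by (simp add: t_def field_simps)
  have hgn: "cmod (g ^ n) \<le> (1 + E1) * h"
  proof -
    have "cmod (g ^ n) \<le> cmod (complex_of_real h) + cmod (g ^ n - complex_of_real h)"
      using norm_triangle_ineq[of "complex_of_real h" "g ^ n - complex_of_real h"] by simp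
    also have "\<dots> \<le> h + E1 * h"
    proof (intro add_mono)
      have "h \<ge> 0" unfolding h_def using a sig_pos by simp
      thus "cmod (complex_of_real h) \<le> h" by simp
      show "cmod (g ^ n - complex_of_real h) \<le> E1 * h" using e1[folded g_def, folded h_def] .
    qed
    finally show "cmod (g ^ n) \<le> (1 + E1) * h" by (simp add: algebra_simps)
  qed
  have hpq: "cmod (p + q + p * q) \<le> etP + etq + etP * etq"
  proof -
    have "cmod (p + q + p * q) \<le> cmod p + cmod q + cmod p * cmod q"
      using norm_triangle_ineq[of "p+q" "p*q"] norm_triangle_ineq[of p q] by (simp add: norm_mult)
    also have "\<dots> \<le> etP + etq + etP * etq" using hp hq hP0 by (intro add_mono mult_mono) auto
    finally show ?thesis .
  qed
  have "Pf (1 - \<epsilon>) \<theta> / 2^d * Gs (1 - \<epsilon>) \<theta> ^ n - Gs 1 \<theta> ^ n = g ^ n * (p + q + p * q)"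
    unfolding gr g_def[symmetric] power_mult_distrib
    by (simp add: p_def q_def field_simps)
  hence "cmod (Pf (1 - \<epsilon>) \<theta> / 2^d * Gs (1 - \<epsilon>) \<theta> ^ n - Gs 1 \<theta> ^ n) = cmod (g ^ n) * cmod (p + q + p * q)"
    by (simp add: norm_mult)
  also have "\<dots> \<le> ((1 + E1) * h) * (etP + etq + etP * etq)"
    by (intro mult_mono hgn hpq) (use hgn in \<open>auto intro: order_trans[OF norm_ge_zero]\<close>)
  finally show ?thesis by (simp add: etP_def etq_def h_def g_def mult_ac)
qed

end


context setting begin

abbreviation "NN \<equiv> PiM {..<d} (\<lambda>_. lborel :: real measure)"

lemma main_bound:
  assumes e: "0 < \<epsilon>" "\<epsilon> \<le> 1/2" and \<delta>: "\<delta> > 0" and dd: "real d * \<delta> \<le> 1/2"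
    and E1: "E1 = exp (n * (real d * \<delta>)^3 / 3) - 1" "E1 < 1"
    and E2: "E2 = (etaX \<delta> * (1 + etaQ \<epsilon> \<delta>) + etaQ \<epsilon> \<delta>) + (exp (n * (4 * (\<epsilon> * (real d * \<delta>) + \<epsilon>^2))) - 1)
        + (etaX \<delta> * (1 + etaQ \<epsilon> \<delta>) + etaQ \<epsilon> \<delta>) * (exp (n * (4 * (\<epsilon> * (real d * \<delta>) + \<epsilon>^2))) - 1)"
  shows "cmod ((LINT \<theta>:angle_box d \<delta>|NN. Pf (1 - \<epsilon>) \<theta> / 2^d * Gs (1 - \<epsilon>) \<theta> ^ n) /
                (LINT \<theta>:angle_box d \<delta>|NN. Gs 1 \<theta> ^ n) - 1) \<le> E2 * (1 + E1) / (1 - E1)"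
proof -
  let ?A = "angle_box d \<delta>"
  have Asets: "?A \<in> sets NN" by (rule box_sets)
  have Afin: "emeasure NN ?A < \<infinity>" using box_emeasure[OF \<delta>] by simp
  have E10: "E1 \<ge> 0" using E1(1) \<delta> by simp
  have eX: "etaX \<delta> \<ge> 0" using \<delta> by (simp add: etaX_def)
  have eQ: "etaQ \<epsilon> \<delta> \<ge> 0" using \<delta> e by (simp add: etaQ_def)
  have eq: "exp (n * (4 * (\<epsilon> * (real d * \<delta>) + \<epsilon>^2))) - 1 \<ge> 0" using \<delta> e by simp
  have E20: "E2 \<ge> 0" unfolding E2 using eX eQ eq by (intro add_nonneg_nonneg mult_nonneg_nonneg) auto
  have e2: "E2 * (1 + E1) \<ge> 0" using E20 E10 by simp
  have hb: "\<bar>Re (Gs 1 \<theta>) ^ n\<bar> \<le> sig ^ n" for \<theta>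
    unfolding power_abs by (intro power_mono) (use order_trans[OF abs_Re_le_cmod norm_Gs1] in auto)
  have gb: "cmod (Gs 1 \<theta> ^ n) \<le> sig ^ n" for \<theta>
    unfolding norm_power by (intro power_mono norm_Gs1) auto
  have bG: "cmod (Gs 1 \<theta> ^ n - complex_of_real (Re (Gs 1 \<theta>) ^ n)) \<le> E1 * Re (Gs 1 \<theta>) ^ n"
    if "\<theta> \<in> ?A" for \<theta>
    using pt_G[OF box_bnd[OF that] dd, of n] E1(1) by simp
  have bF: "cmod (Pf (1 - \<epsilon>) \<theta> / 2^d * Gs (1 - \<epsilon>) \<theta> ^ n - Gs 1 \<theta> ^ n) \<le> E2 * (1 + E1) * Re (Gs 1 \<theta>) ^ n"
    if "\<theta> \<in> ?A" for \<theta>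
    using pt_F[OF box_bnd[OF that] dd e bG[OF that]] unfolding E2 by simp
  have hlow: "Re (Gs 1 \<theta>) ^ n \<ge> (sig / 2) ^ n" if "\<theta> \<in> ?A" for \<theta>
    using Re_Gs1_lb[OF box_bnd[OF that]] dd sig_pos by (intro power_mono) auto
  have iG: "set_integrable NN ?A (\<lambda>\<theta>. Gs 1 \<theta> ^ n)"
    by (rule set_integrable_bdd[OF Asets Afin meas_Gs gb])
  have ih: "set_integrable NN ?A (\<lambda>\<theta>. Re (Gs 1 \<theta>) ^ n)"
    by (rule set_integrable_bdd[OF Asets Afin meas_h]) (use hb in simp)
  have iF: "set_integrable NN ?A (\<lambda>\<theta>. Pf (1 - \<epsilon>) \<theta> / 2^d * Gs (1 - \<epsilon>) \<theta> ^ n)"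
  proof (rule set_integrable_bdd[OF Asets Afin meas_F])
    fix \<theta> assume th: "\<theta> \<in> ?A"
    have "cmod (Pf (1 - \<epsilon>) \<theta> / 2^d * Gs (1 - \<epsilon>) \<theta> ^ n) \<le> cmod (Gs 1 \<theta> ^ n) + cmod (Pf (1 - \<epsilon>) \<theta> / 2^d * Gs (1 - \<epsilon>) \<theta> ^ n - Gs 1 \<theta> ^ n)"
      by (rule norm_triangle_sub)
    also have "\<dots> \<le> sig ^ n + E2 * (1 + E1) * sig ^ n"
      using gb[of \<theta>] bF[OF th] abs_le_D1[OF hb[of \<theta>]] e2 mult_left_mono[of "Re (Gs 1 \<theta>) ^ n" "sig ^ n" "E2 * (1 + E1)"]
      by (intro add_mono) (auto intro: order_trans)
    finally show "cmod (Pf (1 - \<epsilon>) \<theta> / 2^d * Gs (1 - \<epsilon>) \<theta> ^ n) \<le> sig ^ n + E2 * (1 + E1) * sig ^ n" .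
  qed
  have hpos: "(LINT \<theta>:?A|NN. Re (Gs 1 \<theta>) ^ n) > 0"
  proof -
    have "measure NN ?A = (2 * \<delta>) ^ d" using box_emeasure[OF \<delta>] \<delta> by (simp add: measure_def)
    hence mpos: "measure NN ?A > 0" using \<delta> by simp
    have ic: "set_integrable NN ?A (\<lambda>_. (sig / 2) ^ n)"
      by (rule set_integrable_bdd[OF Asets Afin]) auto
    have "(LINT \<theta>:?A|NN. (sig / 2) ^ n) \<le> (LINT \<theta>:?A|NN. Re (Gs 1 \<theta>) ^ n)"
      by (rule set_integral_mono[OF ic ih hlow])
    moreover have "(LINT \<theta>:?A|NN. (sig / 2) ^ n) = measure NN ?A * (sig / 2) ^ n"
      using set_integral_const[OF Asets, of "(sig / 2) ^ n"] Afin by simp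
    moreover have "measure NN ?A * (sig / 2) ^ n > 0" using mpos sig_pos by simp
    ultimately show ?thesis by linarith
  qed
  have "cmod ((LINT \<theta>:?A|NN. Pf (1 - \<epsilon>) \<theta> / 2^d * Gs (1 - \<epsilon>) \<theta> ^ n) /
                (LINT \<theta>:?A|NN. Gs 1 \<theta> ^ n) - 1) \<le> E2 * (1 + E1) / (1 - E1)"
    by (rule ratio_bound[OF iF iG ih hpos bG bF E1(2) e2])
  thus ?thesis .
qed

end


lemma npow0: "c < 0 \<Longrightarrow> (\<lambda>n::nat. real n powr c) \<longlonglongrightarrow> 0"
  by (intro tendsto_neg_powr filterlim_real_sequentially)

lemma npow_mult: "n > 0 \<Longrightarrow> real n powr a * real n powr b = real n powr (a + b)"
  by (simp add: powr_add)

lemma npow_pow: "n > 0 \<Longrightarrow> (real n powr a) ^ k = real n powr (real k * a)"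
  by (simp add: powr_power)

lemma npow_n: "n > 0 \<Longrightarrow> real n = real n powr 1"
  by simp

lemma alg_cancel:
  fixes X B Z Y G c :: complex
  assumes "Z \<noteq> 0"
  shows "X / (B * Z) * Y * G * (c * Z) = c * (X / B * Y * G)"
proof (cases "B = 0")
  case True thus ?thesis by simp
next
  case False thus ?thesis using assms by (simp add: field_simps)
qed

context setting begin

lemma lhs_integrand:
  assumes \<rho>: "\<rho> > 0"
  shows "(\<Prod>j<d-1. 1 + arc_point (rv \<rho>) \<theta> j) / (char_B d S w (arc_point (rv \<rho>) \<theta>) * (\<Prod>j<d. arc_point (rv \<rho>) \<theta> j))
           * ((char_B d S w (arc_point (rv \<rho>) \<theta>) - arc_point (rv \<rho>) \<theta> (d-1) ^ 2 * char_A d S w (arc_point (rv \<rho>) \<theta>)) / (1 - arc_point (rv \<rho>) \<theta> (d-1)))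
           * char_Sbar d S w (arc_point (rv \<rho>) \<theta>) ^ n * (\<Prod>j<d. \<i> * arc_point (rv \<rho>) \<theta> j)
         = \<i> ^ d * 2 ^ d * (Pf \<rho> \<theta> / 2 ^ d * Gs \<rho> \<theta> ^ n)"
proof -
  define z where "z = arc_point (rv \<rho>) \<theta>"
  have r1: "\<forall>j<m. rv \<rho> j = 1" by (simp add: rv_def)
  have zj: "z j = cis (\<theta> j)" if "j < m" for j using that by (simp add: z_def arc_point_def rv_def)
  have zm: "z m = uu \<rho> \<theta>" by (simp add: z_def arc_point_def rv_def uu_def)
  have Z: "(\<Prod>j<d. z j) \<noteq> 0" using \<rho> by (auto simp: z_def arc_point_def rv_def)
  have P1: "(\<Prod>j<m. 1 + z j) = (\<Prod>j<m. 1 + cis (\<theta> j))" by (intro prod.cong) (auto simp: zj)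
  have P2: "(\<Prod>j<d. \<i> * z j) = \<i> ^ d * (\<Prod>j<d. z j)" by (simp add: prod.distrib)
  have B: "char_B d S w z = Bc \<theta>" unfolding z_def by (rule B_closed[OF r1])
  have A: "char_A d S w z = Ac \<theta>" unfolding z_def by (rule A_closed[OF r1])
  have Sb: "char_Sbar d S w z = Gs \<rho> \<theta>" unfolding z_def by (rule Sbar_closed[OF \<rho>])
  have "(\<Prod>j<m. 1 + z j) / (char_B d S w z * (\<Prod>j<d. z j))
           * ((char_B d S w z - z m ^ 2 * char_A d S w z) / (1 - z m))
           * char_Sbar d S w z ^ n * (\<Prod>j<d. \<i> * z j)
       = \<i> ^ d * (Pf \<rho> \<theta> * Gs \<rho> \<theta> ^ n)"
    unfolding P1 P2 B A Sb zm Pf_def using Z by (rule alg_cancel)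
  thus ?thesis unfolding z_def by simp
qed

lemma rhs_integrand:
  assumes "bnd \<delta> \<theta>" "real d * \<delta> \<le> 1/2"
  shows "exp (of_nat n * Ln (char_Sbar d S w (arc_point (\<lambda>_. 1) \<theta>))) = Gs 1 \<theta> ^ n"
proof -
  have "Re (Gs 1 \<theta>) > 0" using Re_Gs1_lb[OF assms(1)] assms(2) sig_pos by simp
  hence "Gs 1 \<theta> \<noteq> 0" by auto
  thus ?thesis unfolding arc1 Sbar_closed[OF zero_less_one] by (simp add: exp_of_nat_mult)
qed

end


lemma ev_pos: "eventually (\<lambda>n::nat. n > 0) sequentially"
  by (rule eventually_gt_at_top)

lemma lim_trans:
  assumes "(\<lambda>n::nat. real n powr c) \<longlonglongrightarrow> 0" "\<And>n. n > 0 \<Longrightarrow> f n = K * real n powr c"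
  shows "f \<longlonglongrightarrow> 0"
proof (rule Lim_transform_eventually[OF tendsto_mult_right_zero[OF assms(1), of K]])
  show "eventually (\<lambda>n. K * real n powr c = f n) sequentially"
    using ev_pos by (rule eventually_mono) (simp add: assms(2))
qed

lemma npow_n1: "n > 0 \<Longrightarrow> real n * real n powr x = real n powr (1 + x)"
  by (simp add: powr_add)

lemma my_limits:
  fixes \<alpha> \<beta> :: real and d :: nat
  assumes \<alpha>\<beta>: "1/2 < \<alpha>" "\<alpha> < 2 * \<beta>" "\<alpha> + \<beta> > 1" "1/3 < \<beta>" "\<beta> < 1/2"
    and \<epsilon>_def: "\<epsilon> = (\<lambda>n::nat. real n powr (-\<alpha>))" and \<delta>_def: "\<delta> = (\<lambda>n::nat. real n powr (-\<beta>))"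
  shows "\<epsilon> \<longlonglongrightarrow> 0" "\<delta> \<longlonglongrightarrow> 0"
    "(\<lambda>n. real n * (real d * \<delta> n)^3 / 3) \<longlonglongrightarrow> 0"
    "(\<lambda>n. real n * (4 * (\<epsilon> n * (real d * \<delta> n) + (\<epsilon> n)^2))) \<longlonglongrightarrow> 0"
    "(\<lambda>n. (real d * \<delta> n)^2 / \<epsilon> n) \<longlonglongrightarrow> 0"
proof -
  show e: "\<epsilon> \<longlonglongrightarrow> 0" unfolding \<epsilon>_def using \<alpha>\<beta> by (intro npow0) auto
  show de: "\<delta> \<longlonglongrightarrow> 0" unfolding \<delta>_def using \<alpha>\<beta> by (intro npow0) auto
  show "(\<lambda>n. real n * (real d * \<delta> n)^3 / 3) \<longlonglongrightarrow> 0"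
  proof (rule lim_trans[of "1 - 3 * \<beta>" _ "real d ^ 3 / 3"])
    show "(\<lambda>n::nat. real n powr (1 - 3 * \<beta>)) \<longlonglongrightarrow> 0" using \<alpha>\<beta> by (intro npow0) auto
    fix n :: nat assume n: "n > 0"
    have "real n * (real n powr -\<beta>)^3 = real n * real n powr (3 * -\<beta>)"
      using n by (simp add: npow_pow)
    also have "\<dots> = real n powr (1 - 3 * \<beta>)" using n by (simp add: npow_n1)
    finally show "real n * (real d * \<delta> n)^3 / 3 = real d ^ 3 / 3 * real n powr (1 - 3 * \<beta>)"
      unfolding \<delta>_def by (simp add: power_mult_distrib)
  qed
  have t1: "(\<lambda>n. real n * (\<epsilon> n * \<delta> n)) \<longlonglongrightarrow> 0"
  proof (rule lim_trans[of "1 - \<alpha> - \<beta>" _ 1])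
    show "(\<lambda>n::nat. real n powr (1 - \<alpha> - \<beta>)) \<longlonglongrightarrow> 0" using \<alpha>\<beta> by (intro npow0) auto
    fix n :: nat assume n: "n > 0"
    have "real n * (real n powr -\<alpha> * real n powr -\<beta>) = real n * real n powr (-\<alpha> + -\<beta>)"
      using n by (simp add: npow_mult)
    also have "\<dots> = real n powr (1 - \<alpha> - \<beta>)" using n by (simp add: npow_n1 algebra_simps)
    finally show "real n * (\<epsilon> n * \<delta> n) = 1 * real n powr (1 - \<alpha> - \<beta>)"
      unfolding \<epsilon>_def \<delta>_def by simp
  qed
  have t2: "(\<lambda>n. real n * (\<epsilon> n)^2) \<longlonglongrightarrow> 0"
  proof (rule lim_trans[of "1 - 2 * \<alpha>" _ 1])
    show "(\<lambda>n::nat. real n powr (1 - 2 * \<alpha>)) \<longlonglongrightarrow> 0" using \<alpha>\<beta> by (intro npow0) auto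
    fix n :: nat assume n: "n > 0"
    have "real n * (real n powr -\<alpha>)^2 = real n * real n powr (2 * -\<alpha>)"
      using n by (simp add: npow_pow)
    also have "\<dots> = real n powr (1 - 2 * \<alpha>)" using n by (simp add: npow_n1)
    finally show "real n * (\<epsilon> n)^2 = 1 * real n powr (1 - 2 * \<alpha>)"
      unfolding \<epsilon>_def by simp
  qed
  have "(\<lambda>n. 4 * real d * (real n * (\<epsilon> n * \<delta> n)) + 4 * (real n * (\<epsilon> n)^2)) \<longlonglongrightarrow> 4 * real d * 0 + 4 * 0"
    by (intro tendsto_intros t1 t2)
  thus "(\<lambda>n. real n * (4 * (\<epsilon> n * (real d * \<delta> n) + (\<epsilon> n)^2))) \<longlonglongrightarrow> 0"
    by (simp add: algebra_simps)
  show "(\<lambda>n. (real d * \<delta> n)^2 / \<epsilon> n) \<longlonglongrightarrow> 0"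
  proof (rule lim_trans[of "\<alpha> - 2 * \<beta>" _ "real d ^ 2"])
    show "(\<lambda>n::nat. real n powr (\<alpha> - 2 * \<beta>)) \<longlonglongrightarrow> 0" using \<alpha>\<beta> by (intro npow0) auto
    fix n :: nat assume n: "n > 0"
    have p2: "(real n powr -\<beta>)^2 = real n powr (2 * -\<beta>)"
      using npow_pow[OF n, of "-\<beta>" 2] by simp
    have "(real n powr -\<beta>)^2 / real n powr -\<alpha> = real n powr (2 * -\<beta>) * real n powr \<alpha>"
      unfolding p2 by (simp add: powr_minus divide_inverse)
    also have "\<dots> = real n powr (\<alpha> - 2 * \<beta>)" using n by (simp add: npow_mult)
    finally show "(real d * \<delta> n)^2 / \<epsilon> n = real d ^ 2 * real n powr (\<alpha> - 2 * \<beta>)"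
      unfolding \<epsilon>_def \<delta>_def by (simp add: power_mult_distrib times_divide_eq_right[symmetric])
  qed
qed



context setting begin

lemma final:
  fixes \<alpha> \<beta> :: real
  assumes \<alpha>\<beta>: "1/2 < \<alpha>" "\<alpha> < 2 * \<beta>" "\<alpha> + \<beta> > 1" "1/3 < \<beta>" "\<beta> < 1/2"
  shows "(\<lambda>n::nat.
            1 / (2 * complex_of_real pi * \<i>) ^ d *
            torus_arc_integral d (\<lambda>j. if j = d - 1 then 1 - real n powr (-\<alpha>) else 1) (real n powr (-\<beta>))
              (\<lambda>z. (\<Prod>j<d-1. 1 + z j) / (char_B d S w z * (\<Prod>j<d. z j))
                   * ((char_B d S w z - z (d-1) ^ 2 * char_A d S w z) / (1 - z (d-1)))
                   * char_Sbar d S w z ^ n))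
         \<sim>[at_top]
         (\<lambda>n::nat.
            1 / complex_of_real pi ^ d *
            (LINT \<theta>:angle_box d (real n powr (-\<beta>))|PiM {..<d} (\<lambda>_. lborel).
               exp (of_nat n * Ln (char_Sbar d S w (arc_point (\<lambda>_. 1) \<theta>)))))"
    (is "?L \<sim>[at_top] ?R")
proof -
  define \<epsilon> where "\<epsilon> = (\<lambda>n::nat. real n powr (-\<alpha>))"
  define \<delta> where "\<delta> = (\<lambda>n::nat. real n powr (-\<beta>))"
  note L = my_limits[OF \<alpha>\<beta> \<epsilon>_def \<delta>_def]
  define E1 where "E1 n = exp (n * (real d * \<delta> n)^3 / 3) - 1" for n :: nat
  define EP where "EP n = etaX (\<delta> n) * (1 + etaQ (\<epsilon> n) (\<delta> n)) + etaQ (\<epsilon> n) (\<delta> n)" for n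
  define Eq where "Eq n = exp (n * (4 * (\<epsilon> n * (real d * \<delta> n) + (\<epsilon> n)^2))) - 1" for n :: nat
  define E2 where "E2 n = EP n + Eq n + EP n * Eq n" for n
  define IF where "IF n = (LINT \<theta>:angle_box d (\<delta> n)|NN. Pf (1 - \<epsilon> n) \<theta> / 2^d * Gs (1 - \<epsilon> n) \<theta> ^ n)" for n
  define IG where "IG n = (LINT \<theta>:angle_box d (\<delta> n)|NN. Gs 1 \<theta> ^ n)" for n
  have lE1: "E1 \<longlonglongrightarrow> 0"
  proof -
    have "(\<lambda>n. exp (real n * (real d * \<delta> n)^3 / 3) - 1) \<longlonglongrightarrow> exp 0 - 1"
      by (intro tendsto_intros L(3))
    thus ?thesis by (simp add: E1_def[abs_def])
  qed
  have lEq: "Eq \<longlonglongrightarrow> 0"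
  proof -
    have "(\<lambda>n. exp (real n * (4 * (\<epsilon> n * (real d * \<delta> n) + (\<epsilon> n)^2))) - 1) \<longlonglongrightarrow> exp 0 - 1"
      by (intro tendsto_intros L(4))
    thus ?thesis by (simp add: Eq_def[abs_def])
  qed
  have lQ: "(\<lambda>n. etaQ (\<epsilon> n) (\<delta> n)) \<longlonglongrightarrow> 0"
  proof -
    have "(\<lambda>n. (real d * \<delta> n)^2 / \<epsilon> n + 2 * (real d * \<delta> n)^2 + \<epsilon> n + \<delta> n) \<longlonglongrightarrow> 0 + 2 * (real d * 0)^2 + 0 + 0"
      by (intro tendsto_intros L(1,2,5))
    thus ?thesis by (simp add: etaQ_def)
  qed
  have lX: "(\<lambda>n. etaX (\<delta> n)) \<longlonglongrightarrow> 0"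
  proof -
    have "(\<lambda>n. exp (real d * \<delta> n) - 1) \<longlonglongrightarrow> exp (real d * 0) - 1"
      by (intro tendsto_intros L(2))
    thus ?thesis by (simp add: etaX_def)
  qed
  have lEP: "EP \<longlonglongrightarrow> 0"
  proof -
    have "EP \<longlonglongrightarrow> 0 * (1 + 0) + 0" unfolding EP_def[abs_def] by (intro tendsto_intros lX lQ)
    thus ?thesis by simp
  qed
  have lB: "(\<lambda>n. E2 n * (1 + E1 n) / (1 - E1 n)) \<longlonglongrightarrow> 0"
  proof -
    have "(\<lambda>n. E2 n * (1 + E1 n) / (1 - E1 n)) \<longlonglongrightarrow> (0 + 0 + 0 * 0) * (1 + 0) / (1 - 0)"
      unfolding E2_def by (intro tendsto_intros lEP lEq lE1) simp
    thus ?thesis by simp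
  qed
  have ev: "eventually (\<lambda>n. n > 0 \<and> \<epsilon> n < 1/2 \<and> real d * \<delta> n < 1/2 \<and> E1 n < 1) sequentially"
  proof (intro eventually_conj ev_pos)
    show "eventually (\<lambda>n. \<epsilon> n < 1/2) sequentially" using order_tendstoD(2)[OF L(1), of "1/2"] by simp
    have "(\<lambda>n. real d * \<delta> n) \<longlonglongrightarrow> real d * 0" by (intro tendsto_intros L(2))
    from order_tendstoD(2)[OF this, of "1/2"]
    show "eventually (\<lambda>n. real d * \<delta> n < 1/2) sequentially" by simp
    show "eventually (\<lambda>n. E1 n < 1) sequentially" using order_tendstoD(2)[OF lE1, of 1] by simp
  qed
  have key: "cmod (?L n / ?R n - 1) \<le> E2 n * (1 + E1 n) / (1 - E1 n)"
    and Req: "?L n / ?R n = IF n / IG n"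
    if n: "n > 0" "\<epsilon> n < 1/2" "real d * \<delta> n < 1/2" "E1 n < 1" for n
  proof -
    have ep: "\<epsilon> n > 0" using n by (simp add: \<epsilon>_def)
    have dp: "\<delta> n > 0" using n by (simp add: \<delta>_def)
    have \<rho>: "1 - \<epsilon> n > 0" using n by simp
    have dn: "real n powr (-\<beta>) = \<delta> n" by (simp add: \<delta>_def)
    have rr: "(\<lambda>j. if j = d - 1 then 1 - real n powr (-\<alpha>) else 1) = rv (1 - \<epsilon> n)"
      by (simp add: rv_def \<epsilon>_def)
    have "torus_arc_integral d (\<lambda>j. if j = d - 1 then 1 - real n powr (-\<alpha>) else 1) (real n powr (-\<beta>))
              (\<lambda>z. (\<Prod>j<d-1. 1 + z j) / (char_B d S w z * (\<Prod>j<d. z j))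
                   * ((char_B d S w z - z (d-1) ^ 2 * char_A d S w z) / (1 - z (d-1)))
                   * char_Sbar d S w z ^ n)
        = (LINT \<theta>:angle_box d (\<delta> n)|NN. \<i> ^ d * 2 ^ d * (Pf (1 - \<epsilon> n) \<theta> / 2 ^ d * Gs (1 - \<epsilon> n) \<theta> ^ n))"
      unfolding torus_arc_integral_def rr dn
      by (intro set_lebesgue_integral_cong box_sets allI impI lhs_integrand[OF \<rho>])
    also have "\<dots> = \<i> ^ d * 2 ^ d * IF n" unfolding IF_def by (simp only: set_integral_mult_right)
    finally have Leq: "?L n = 1 / complex_of_real pi ^ d * IF n"
      by (simp add: power_mult_distrib)
    have "(LINT \<theta>:angle_box d (real n powr (-\<beta>))|PiM {..<d} (\<lambda>_. lborel).
               exp (of_nat n * Ln (char_Sbar d S w (arc_point (\<lambda>_. 1) \<theta>)))) = IG n"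
      unfolding IG_def dn
      by (intro set_lebesgue_integral_cong box_sets allI impI rhs_integrand[OF box_bnd]) (use n in auto)
    hence Req': "?R n = 1 / complex_of_real pi ^ d * IG n" by simp
    show Req: "?L n / ?R n = IF n / IG n" unfolding Leq Req' by simp
    show "cmod (?L n / ?R n - 1) \<le> E2 n * (1 + E1 n) / (1 - E1 n)"
      unfolding Req IF_def IG_def
      by (rule main_bound[OF ep _ dp _ E1_def]) (use n in \<open>auto simp: E2_def EP_def Eq_def\<close>)
  qed
  have "(\<lambda>n. ?L n / ?R n - 1) \<longlonglongrightarrow> 0"
  proof (rule Lim_null_comparison[OF _ lB])
    show "eventually (\<lambda>n. norm (?L n / ?R n - 1) \<le> E2 n * (1 + E1 n) / (1 - E1 n)) sequentially"
      using ev by (rule eventually_mono) (intro key; simp)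
  qed
  hence "(\<lambda>n. ?L n / ?R n) \<longlonglongrightarrow> 1"
    by (rule LIM_zero_cancel)
  thus ?thesis by (rule asymp_equivI')
qed

end

theorem mainTheorem6:
  fixes d :: nat and S :: "(nat \<Rightarrow> int) set" and w :: "(nat \<Rightarrow> int) \<Rightarrow> real"
    and \<alpha> \<beta> :: real
  assumes d: "d \<ge> 1"
    and steps: "\<forall>s\<in>S. (\<forall>j<d. s j \<in> {-1, 0, 1}) \<and> (\<forall>j\<ge>d. s j = 0) \<and> s \<noteq> (\<lambda>_. 0)"
    and wpos: "\<forall>s\<in>S. w s > 0"
    and symS: "\<forall>j<d-1. \<forall>s. s \<in> S \<longleftrightarrow> s(j := - s j) \<in> S"
    and symw: "\<forall>j<d-1. \<forall>s\<in>S. w (s(j := - s j)) = w s"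
    and both: "\<forall>j<d. (\<exists>s\<in>S. s j = 1) \<and> (\<exists>s\<in>S. s j = -1)"
    and drift: "char_A d S w (\<lambda>_. 1) = char_B d S w (\<lambda>_. 1)"
    and \<alpha>\<beta>: "1/2 < \<alpha>" "\<alpha> < 2 * \<beta>" "\<alpha> + \<beta> > 1" "1/3 < \<beta>" "\<beta> < 1/2"
  shows "(\<lambda>n::nat.
            1 / (2 * complex_of_real pi * \<i>) ^ d *
            torus_arc_integral d (\<lambda>j. if j = d - 1 then 1 - real n powr (-\<alpha>) else 1) (real n powr (-\<beta>))
              (\<lambda>z. (\<Prod>j<d-1. 1 + z j) / (char_B d S w z * (\<Prod>j<d. z j))
                   * ((char_B d S w z - z (d-1) ^ 2 * char_A d S w z) / (1 - z (d-1)))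
                   * char_Sbar d S w z ^ n))
         \<sim>[at_top]
         (\<lambda>n::nat.
            1 / complex_of_real pi ^ d *
            (LINT \<theta>:angle_box d (real n powr (-\<beta>))|PiM {..<d} (\<lambda>_. lborel).
               exp (of_nat n * Ln (char_Sbar d S w (arc_point (\<lambda>_. 1) \<theta>)))))"
proof -
  interpret setting d S w
    by (rule setting.intro[OF d steps wpos symS symw both drift])
  show ?thesis by (rule final[OF \<alpha>\<beta>])
qed

end
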